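(* In a finite dynamic game as described in the context, let $K=(K^i)_{i\in\mathcal{I}}$ be compressed information. Suppose that for every player $i$ and every profile $\rho^{-i}$ of $K^j$-based strategies of players $j\neq i$ there exist functions $\Phi_t^{i,\rho^{-i}}:\mathcal{K}_t^i\to\Delta(\mathcal{X}_t\times\mathcal{K}_t^{-i})$, $t\in\mathcal{T}$, such that $$\Pr^{g^i,\rho^{-i}}(x_t,k_t^{-i}\mid h_t^i)=\Phi_t^{i,\rho^{-i}}(x_t,k_t^{-i}\mid k_t^i)$$ for all behavioral strategies $g^i$ of player $i$, all $t\in\mathcal{T}$, and all $h_t^i$ admissible under $(g^i,\rho^{-i})$. Then $K$ is mutually sufficient information.
   Context: Game model: finite set of players $\mathcal{I}$, times $\mathcal{T}=\{1,\dots,T\}$. At time $t$ each player $i$ takes action $U_t^i\in\mathcal{U}_t^i$, obtains reward $R_t^i\in[-1,1]$ and learns new information $Z_t^i\in\mathcal{Z}_t^i$. There is a state $X_t\in\mathcal{X}_t$ with $(X_{t+1},Z_t,R_t)=f_t(X_t,U_t,W_t)$ for fixed functions $f_t$. Primitive random variables $(X_1,H_1)$ and $W_1,\dots,W_T$ are mutually independent with commonly known distributions. All sets are finite. Perfect recall: $H_t^i=(H_1^i,Z_{1:t-1}^i)\in\mathcal{H}_t^i$, and $U_t^i$ is a component of $Z_t^i$. Behavioral strategy $g_t^i:\mathcal{H}_t^i\to\Delta(\mathcal{U}_t^i)$. A realization is admissible under a partial profile if it has positive probability under some completion of it. Compression: $K_1^i=\iota_1^i(H_1^i)$, $K_t^i=\iota_t^i(K_{t-1}^i,Z_{t-1}^i)$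 for fixed maps, finite value sets $\mathcal{K}_t^i$; $k_t^i$ is the compression of $h_t^i$; $K_t^{-i}=(K_t^j)_{j\ne i}$; a $K^i$-based strategy has $\rho_t^i:\mathcal{K}_t^i\to\Delta(\mathcal{U}_t^i)$. Information state: given $g^{-i}$, $K^i$ is an information state under $g^{-i}$ if there exist $P_t^{i,g^{-i}}:\mathcal{K}_t^i\times\mathcal{U}_t^i\to\Delta(\mathcal{K}_{t+1}^i)$, $r_t^{i,g^{-i}}:\mathcal{K}_t^i\times\mathcal{U}_t^i\to[-1,1]$ (independent of $g^i$) with $\Pr^{g^i,g^{-i}}(k_{t+1}^i\mid h_t^i,u_t^i)=P_t^{i,g^{-i}}(k_{t+1}^i\mid k_t^i,u_t^i)$ ($t<T$) and $\mathbb{E}^{g^i,g^{-i}}[R_t^i\mid h_t^i,u_t^i]=r_t^{i,g^{-i}}(k_t^i,u_t^i)$ for all $g^i$ and all $(h_t^i,u_t^i)$ admissible under $(g^i,g^{-i})$. $K$ is mutually sufficient information if for every $i$ and every profile $\rho^{-i}$ of $K^j$-based strategies ($j\ne i$), $K^i$ is an information state under $\rho^{-i}$. *)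

theory Defs
  imports "HOL-Probability.Probability"
begin

(* A history of player i at time t: (H_1^i, [Z_1^i, ..., Z_{t-1}^i]) (perfect recall). *)
type_synonym ('h,'z) hist = "'h \<times> 'z list"

type_synonym ('i,'h,'z,'u) profile = "nat \<Rightarrow> 'i \<Rightarrow> ('h,'z) hist \<Rightarrow> 'u pmf"

(* dynamics f_t : X_t x U_t x W_t -> X_{t+1} x Z_t x R_t *)
type_synonym ('x,'i,'u,'w,'z) dynamics =
  "nat \<Rightarrow> 'x \<Rightarrow> ('i \<Rightarrow> 'u) \<Rightarrow> 'w \<Rightarrow> 'x \<times> ('i \<Rightarrow> 'z) \<times> ('i \<Rightarrow> real)"

definition act_prof :: "('i,'h,'z,'u) profile \<Rightarrow> nat \<Rightarrow> ('i \<Rightarrow> ('h,'z) hist) \<Rightarrow> ('i \<Rightarrow> 'u) pmf" where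
  "act_prof g t H = Pi_pmf UNIV undefined (\<lambda>j. g t j (H j))"

definition step_of :: "(nat \<Rightarrow> 'w pmf) \<Rightarrow> ('i,'h,'z,'u) profile \<Rightarrow> nat
    \<Rightarrow> ('x \<times> ('i \<Rightarrow> ('h,'z) hist)) pmf
    \<Rightarrow> ('x \<times> ('i \<Rightarrow> ('h,'z) hist) \<times> ('i \<Rightarrow> 'u) \<times> 'w) pmf" where
  "step_of \<nu> g t S =
     bind_pmf S (\<lambda>(x,H). bind_pmf (act_prof g t H) (\<lambda>u. map_pmf (\<lambda>w. (x,H,u,w)) (\<nu> t)))"

definition next_state :: "('x,'i,'u,'w,'z) dynamics \<Rightarrow> nat
    \<Rightarrow> 'x \<times> ('i \<Rightarrow> ('h,'z) hist) \<times> ('i \<Rightarrow> 'u) \<times> 'w \<Rightarrow> 'x \<times> ('i \<Rightarrow> ('h,'z) hist)" where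
  "next_state f t s = (case s of (x,H,u,w) \<Rightarrow>
     (case f t x u w of (x',z,r) \<Rightarrow> (x', \<lambda>j. (fst (H j), snd (H j) @ [z j]))))"

(* sd ... n = distribution of (X_{n+1}, H_{n+1}) *)
fun sd :: "('x \<times> ('i \<Rightarrow> 'h)) pmf \<Rightarrow> (nat \<Rightarrow> 'w pmf) \<Rightarrow> ('x,'i,'u,'w,'z) dynamics
    \<Rightarrow> ('i,'h,'z,'u) profile \<Rightarrow> nat \<Rightarrow> ('x \<times> ('i \<Rightarrow> ('h,'z) hist)) pmf" where
  "sd \<mu> \<nu> f g 0 = map_pmf (\<lambda>(x,h1). (x, \<lambda>j. (h1 j, []))) \<mu>"
| "sd \<mu> \<nu> f g (Suc n) = map_pmf (next_state f (Suc n)) (step_of \<nu> g (Suc n) (sd \<mu> \<nu> f g n))"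

definition state_at where "state_at \<mu> \<nu> f g t = sd \<mu> \<nu> f g (t - 1)"

definition step_at where "step_at \<mu> \<nu> f g t = step_of \<nu> g t (state_at \<mu> \<nu> f g t)"

definition next_hist :: "('x,'i,'u,'w,'z) dynamics \<Rightarrow> nat \<Rightarrow> 'i
    \<Rightarrow> 'x \<times> ('i \<Rightarrow> ('h,'z) hist) \<times> ('i \<Rightarrow> 'u) \<times> 'w \<Rightarrow> ('h,'z) hist" where
  "next_hist f t i s = snd (next_state f t s) i"

definition reward :: "('x,'i,'u,'w,'z) dynamics \<Rightarrow> nat \<Rightarrow> 'i
    \<Rightarrow> 'x \<times> ('i \<Rightarrow> ('h,'z) hist) \<times> ('i \<Rightarrow> 'u) \<times> 'w \<Rightarrow> real" where
  "reward f t i s = (case s of (x,H,u,w) \<Rightarrow> (case f t x u w of (x',z,r) \<Rightarrow> r i))"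

(* Compression: K_1^i = iota_1^i(H_1^i), K_t^i = iota_t^i(K_{t-1}^i, Z_{t-1}^i). *)
fun compr_aux :: "(nat \<Rightarrow> 'i \<Rightarrow> 'k \<Rightarrow> 'z \<Rightarrow> 'k) \<Rightarrow> 'i \<Rightarrow> 'k \<Rightarrow> nat \<Rightarrow> 'z list \<Rightarrow> 'k" where
  "compr_aux \<iota> i k t [] = k"
| "compr_aux \<iota> i k t (z # zs) = compr_aux \<iota> i (\<iota> (Suc t) i k z) (Suc t) zs"

definition compress :: "('i \<Rightarrow> 'h \<Rightarrow> 'k) \<Rightarrow> (nat \<Rightarrow> 'i \<Rightarrow> 'k \<Rightarrow> 'z \<Rightarrow> 'k) \<Rightarrow> 'i \<Rightarrow> ('h,'z) hist \<Rightarrow> 'k" where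
  "compress \<iota>1 \<iota> i h = compr_aux \<iota> i (\<iota>1 i (fst h)) 1 (snd h)"

definition behav_strat :: "(nat \<Rightarrow> 'i \<Rightarrow> 'u set) \<Rightarrow> nat \<Rightarrow> 'i \<Rightarrow> (nat \<Rightarrow> ('h,'z) hist \<Rightarrow> 'u pmf) \<Rightarrow> bool" where
  "behav_strat A T i gi \<longleftrightarrow> (\<forall>t\<in>{1..T}. \<forall>h. set_pmf (gi t h) \<subseteq> A t i)"

(* profile rho^{-i} of K^j-based strategies of the players j \<noteq> i (component i ignored) *)
definition kbased_others :: "(nat \<Rightarrow> 'i \<Rightarrow> 'u set) \<Rightarrow> nat \<Rightarrow> 'i \<Rightarrow> (nat \<Rightarrow> 'i \<Rightarrow> 'k \<Rightarrow> 'u pmf) \<Rightarrow> bool" where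
  "kbased_others A T i \<rho> \<longleftrightarrow> (\<forall>j. j \<noteq> i \<longrightarrow> (\<forall>t\<in>{1..T}. \<forall>k. set_pmf (\<rho> t j k) \<subseteq> A t j))"

definition join_prof :: "'i \<Rightarrow> (nat \<Rightarrow> ('h,'z) hist \<Rightarrow> 'u pmf) \<Rightarrow> ('i,'h,'z,'u) profile \<Rightarrow> ('i,'h,'z,'u) profile" where
  "join_prof i gi gm = (\<lambda>t j h. if j = i then gi t h else gm t j h)"

definition kprof :: "('i \<Rightarrow> 'h \<Rightarrow> 'k) \<Rightarrow> (nat \<Rightarrow> 'i \<Rightarrow> 'k \<Rightarrow> 'z \<Rightarrow> 'k) \<Rightarrow> (nat \<Rightarrow> 'i \<Rightarrow> 'k \<Rightarrow> 'u pmf) \<Rightarrow> ('i,'h,'z,'u) profile" where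
  "kprof \<iota>1 \<iota> \<rho> = (\<lambda>t j h. \<rho> t j (compress \<iota>1 \<iota> j h))"

(* K^i is an information state under g^{-i} (gm; its component i is ignored).
   Admissibility under the complete profile (g^i,g^{-i}) = positive probability. *)
definition info_state where
  "info_state \<mu> \<nu> f A T \<iota>1 \<iota> i gm \<longleftrightarrow>
    (\<exists>(P :: nat \<Rightarrow> 'k \<Rightarrow> 'u \<Rightarrow> 'k pmf) (r :: nat \<Rightarrow> 'k \<Rightarrow> 'u \<Rightarrow> real).
       (\<forall>t k a. r t k a \<in> {-1..1}) \<and>
       (\<forall>gi. behav_strat A T i gi \<longrightarrow>
          (\<forall>t\<in>{1..T}. \<forall>h a.
             let D = step_at \<mu> \<nu> f (join_prof i gi gm) t;
                 B = {s. fst (snd s) i = h \<and> fst (snd (snd s)) i = a}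
             in measure_pmf.prob D B > 0 \<longrightarrow>
                ((t < T \<longrightarrow> (\<forall>k'. measure_pmf.prob (cond_pmf D B)
                       {s. compress \<iota>1 \<iota> i (next_hist f t i s) = k'}
                     = pmf (P t (compress \<iota>1 \<iota> i h) a) k')) \<and>
                 measure_pmf.expectation (cond_pmf D B) (reward f t i)
                     = r t (compress \<iota>1 \<iota> i h) a))))"

definition mutually_sufficient where
  "mutually_sufficient \<mu> \<nu> f A T \<iota>1 \<iota> \<longleftrightarrow>
    (\<forall>i \<rho>. kbased_others A T i \<rho> \<longrightarrow> info_state \<mu> \<nu> f A T \<iota>1 \<iota> i (kprof \<iota>1 \<iota> \<rho>))"

(* well-formed finite game: U_t^i is a component of Z_t^i, rewards in [-1,1] *)
definition game_wf :: "('x,'i,'u,'w,'z) dynamics \<Rightarrow> (nat \<Rightarrow> 'i \<Rightarrow> 'u set) \<Rightarrow> (nat \<Rightarrow> 'i \<Rightarrow> 'z \<Rightarrow> 'u) \<Rightarrow> nat \<Rightarrow> bool" where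
  "game_wf f A actof T \<longleftrightarrow> (\<forall>t\<in>{1..T}. \<forall>x u w. (\<forall>j. u j \<in> A t j) \<longrightarrow>
      (case f t x u w of (x',z,r) \<Rightarrow> (\<forall>j. actof t j (z j) = u j) \<and> (\<forall>j. r j \<in> {-1..1})))"

end

theory Submission imports Defs begin

lemma sd_len: "(x,H) \<in> set_pmf (sd \<mu> \<nu> f g n) \<Longrightarrow> length (snd (H j)) = n"
proof (induction n arbitrary: x H)
  case 0 then show ?case by auto
next
  case (Suc n)
  then show ?case
    by (auto simp: step_of_def next_state_def split: prod.splits)
qed

lemma compr_aux_snoc:
  "compr_aux \<iota> i k t (zs @ [z]) = \<iota> (Suc (t + length zs)) i (compr_aux \<iota> i k t zs) z"
  by (induction zs arbitrary: k t) auto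

lemma emeasure_cond:
  assumes "set_pmf p \<inter> B \<noteq> {}"
  shows "emeasure (cond_pmf p B) X = emeasure p (B \<inter> X) / emeasure p B"
  using assms by (simp add: cond_pmf.rep_eq)

lemma nn_integral_cond:
  assumes "set_pmf p \<inter> B \<noteq> {}"
  shows "(\<integral>\<^sup>+x. F x \<partial>cond_pmf p B) = (\<integral>\<^sup>+x. F x * indicator B x \<partial>p) / emeasure p B"
  using assms by (simp add: cond_pmf.rep_eq nn_integral_uniform_measure)

lemma measure_cong_set_pmf:
  assumes "\<And>x. x \<in> set_pmf p \<Longrightarrow> x \<in> A \<longleftrightarrow> x \<in> B"
  shows "measure_pmf.prob p A = measure_pmf.prob p B"
proof -
  have "A \<inter> set_pmf p = B \<inter> set_pmf p" using assms by auto
  then show ?thesis by (metis measure_Int_set_pmf)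
qed

definition Kr :: "('i \<Rightarrow> 'h \<Rightarrow> 'k) \<Rightarrow> (nat \<Rightarrow> 'i \<Rightarrow> 'k \<Rightarrow> 'z \<Rightarrow> 'k) \<Rightarrow> 'i \<Rightarrow> ('i \<Rightarrow> ('h,'z) hist) \<Rightarrow> 'i \<Rightarrow> 'k" where
  "Kr \<iota>1 \<iota> i H = restrict (\<lambda>j. compress \<iota>1 \<iota> j (H j)) (-{i})"

definition Yv where
  "Yv \<iota>1 \<iota> i s = (fst s, Kr \<iota>1 \<iota> i (fst (snd s)), fst (snd (snd s)), snd (snd (snd s)))"

definition Psik :: "(nat \<Rightarrow> 'w pmf) \<Rightarrow> (nat \<Rightarrow> 'i \<Rightarrow> 'k \<Rightarrow> 'u pmf) \<Rightarrow> 'i \<Rightarrow> nat \<Rightarrow> 'u \<Rightarrow> 'x \<times> ('i \<Rightarrow> 'k)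
   \<Rightarrow> ('x \<times> ('i \<Rightarrow> 'k) \<times> ('i \<Rightarrow> 'u) \<times> 'w) pmf" where
  "Psik \<nu> \<rho> i t a = (\<lambda>(x,kk). bind_pmf (Pi_pmf (-{i}) undefined (\<lambda>j. \<rho> t j (kk j)))
      (\<lambda>fu. map_pmf (\<lambda>w. (x,kk,fu(i:=a),w)) (\<nu> t)))"

lemma act_prof_split:
  fixes i :: "'i::finite"
  assumes "H i = h"
  shows "act_prof (join_prof i gi (kprof \<iota>1 \<iota> \<rho>)) t H =
    map_pmf (\<lambda>(y,fu). fu(i:=y)) (pair_pmf (gi t h) (Pi_pmf (-{i}) undefined (\<lambda>j. \<rho> t j (Kr \<iota>1 \<iota> i H j))))"
proof -
  have "act_prof (join_prof i gi (kprof \<iota>1 \<iota> \<rho>)) t H =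
     Pi_pmf (insert i (-{i})) undefined (\<lambda>j. join_prof i gi (kprof \<iota>1 \<iota> \<rho>) t j (H j))"
  proof -
    have U: "insert i (-{i}) = (UNIV::'i set)" by auto
    show ?thesis unfolding act_prof_def U ..
  qed
  also have "\<dots> = map_pmf (\<lambda>(y,fu). fu(i:=y)) (pair_pmf (join_prof i gi (kprof \<iota>1 \<iota> \<rho>) t i (H i))
      (Pi_pmf (-{i}) undefined (\<lambda>j. join_prof i gi (kprof \<iota>1 \<iota> \<rho>) t j (H j))))"
    by (rule Pi_pmf_insert) auto
  also have "Pi_pmf (-{i}) undefined (\<lambda>j. join_prof i gi (kprof \<iota>1 \<iota> \<rho>) t j (H j))
      = Pi_pmf (-{i}) undefined (\<lambda>j. \<rho> t j (Kr \<iota>1 \<iota> i H j))"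
    by (rule Pi_pmf_cong) (auto simp: join_prof_def kprof_def Kr_def)
  finally show ?thesis using assms by (simp add: join_prof_def fun_upd_def)
qed

lemma kernel_emeasure:
  fixes i :: "'i::finite"
  shows "emeasure (bind_pmf (act_prof (join_prof i gi (kprof \<iota>1 \<iota> \<rho>)) t H) (\<lambda>u. map_pmf (\<lambda>w. (x,H,u,w)) (\<nu> t)))
      {s. fst (snd s) i = h \<and> fst (snd (snd s)) i = a \<and> Yv \<iota>1 \<iota> i s \<in> G}
     = (if H i = h then ennreal (pmf (gi t h) a) * emeasure (Psik \<nu> \<rho> i t a (x, Kr \<iota>1 \<iota> i H)) G else 0)"
proof (cases "H i = h")
  case False then show ?thesis by simp
next
  case True
  let ?Q = "Pi_pmf (-{i}) undefined (\<lambda>j. \<rho> t j (Kr \<iota>1 \<iota> i H j))"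
  let ?E = "{s. fst (snd s) i = h \<and> fst (snd (snd s)) i = a \<and> Yv \<iota>1 \<iota> i s \<in> G}"
  let ?F = "\<lambda>fu. \<integral>\<^sup>+w. indicator G (x, Kr \<iota>1 \<iota> i H, fu(i:=a), w) \<partial>\<nu> t"
  have "emeasure (bind_pmf (act_prof (join_prof i gi (kprof \<iota>1 \<iota> \<rho>)) t H) (\<lambda>u. map_pmf (\<lambda>w. (x,H,u,w)) (\<nu> t))) ?E
     = (\<integral>\<^sup>+y. \<integral>\<^sup>+fu. \<integral>\<^sup>+w. indicator ?E (x,H,fu(i:=y),w) \<partial>\<nu> t \<partial>?Q \<partial>gi t h)"
    unfolding act_prof_split[of H i h, OF True] map_pmf_def pair_pmf_def
    by (simp add: bind_assoc_pmf bind_return_pmf)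
  also have "\<dots> = (\<integral>\<^sup>+y. (\<integral>\<^sup>+fu. ?F fu \<partial>?Q) * indicator {a} y \<partial>gi t h)"
  proof (rule nn_integral_cong)
    fix y
    show "(\<integral>\<^sup>+fu. \<integral>\<^sup>+w. indicator ?E (x,H,fu(i:=y),w) \<partial>\<nu> t \<partial>?Q) = (\<integral>\<^sup>+fu. ?F fu \<partial>?Q) * indicator {a} y"
      by (cases "y = a") (simp_all add: Yv_def True indicator_def)
  qed
  also have "\<dots> = (\<integral>\<^sup>+fu. ?F fu \<partial>?Q) * emeasure (gi t h) {a}"
    by (simp add: nn_integral_multc)
  also have "(\<integral>\<^sup>+fu. ?F fu \<partial>?Q) = emeasure (Psik \<nu> \<rho> i t a (x, Kr \<iota>1 \<iota> i H)) G"
  proof -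
    have "\<And>fu. ?F fu = emeasure (\<nu> t) ((\<lambda>w. (x, Kr \<iota>1 \<iota> i H, fu(i:=a), w)) -` G)"
    proof -
      fix fu
      have "?F fu = (\<integral>\<^sup>+w. indicator ((\<lambda>w. (x, Kr \<iota>1 \<iota> i H, fu(i:=a), w)) -` G) w \<partial>\<nu> t)"
        by (simp add: indicator_def)
      then show "?F fu = emeasure (\<nu> t) ((\<lambda>w. (x, Kr \<iota>1 \<iota> i H, fu(i:=a), w)) -` G)"
        by simp
    qed
    then show ?thesis unfolding Psik_def by simp
  qed
  finally show ?thesis using True by (simp add: emeasure_pmf_single mult.commute)
qed

lemma emeasure_pmf_ne_top: "emeasure (measure_pmf p) A \<noteq> top"
  by (simp add: measure_pmf.emeasure_eq_measure)

lemma D_emeasure: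
  fixes i :: "'i::finite"
  assumes ne: "set_pmf S \<inter> {s. snd s i = h} \<noteq> {}"
    and Phi: "map_pmf (\<lambda>s. (fst s, Kr \<iota>1 \<iota> i (snd s))) (cond_pmf S {s. snd s i = h}) = Phi0"
  shows "emeasure (step_of \<nu> (join_prof i gi (kprof \<iota>1 \<iota> \<rho>)) t S)
      {s. fst (snd s) i = h \<and> fst (snd (snd s)) i = a \<and> Yv \<iota>1 \<iota> i s \<in> G}
     = ennreal (pmf (gi t h) a) * emeasure S {s. snd s i = h} * emeasure (bind_pmf Phi0 (Psik \<nu> \<rho> i t a)) G"
proof -
  let ?E = "{s. fst (snd s) i = h \<and> fst (snd (snd s)) i = a \<and> Yv \<iota>1 \<iota> i s \<in> G}"
  let ?B = "{s. snd s i = h}"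
  let ?V = "\<lambda>s. (fst s, Kr \<iota>1 \<iota> i (snd s))"
  let ?psi = "\<lambda>v. emeasure (Psik \<nu> \<rho> i t a v) G"
  have "emeasure (step_of \<nu> (join_prof i gi (kprof \<iota>1 \<iota> \<rho>)) t S) ?E
      = (\<integral>\<^sup>+s. ennreal (pmf (gi t h) a) * (?psi (?V s) * indicator ?B s) \<partial>S)"
  proof -
    have pt: "\<And>s. emeasure (case s of (x,H) \<Rightarrow> bind_pmf (act_prof (join_prof i gi (kprof \<iota>1 \<iota> \<rho>)) t H) (\<lambda>u. map_pmf (\<lambda>w. (x,H,u,w)) (\<nu> t))) ?E
       = ennreal (pmf (gi t h) a) * (?psi (?V s) * indicator ?B s)"
    proof -
      fix s :: "'a \<times> ('i \<Rightarrow> ('b,'c) hist)"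
      obtain x H where s: "s = (x,H)" by fastforce
      show "?thesis s"
      unfolding s prod.case
      apply (subst kernel_emeasure)
      apply (simp add: indicator_def)
      done
    qed
    show ?thesis
      unfolding step_of_def emeasure_bind_pmf
      by (simp only: pt)
  qed
  also have "\<dots> = ennreal (pmf (gi t h) a) * (\<integral>\<^sup>+s. ?psi (?V s) * indicator ?B s \<partial>S)"
    by (simp add: nn_integral_cmult)
  also have "(\<integral>\<^sup>+s. ?psi (?V s) * indicator ?B s \<partial>S) = (\<integral>\<^sup>+s. ?psi (?V s) \<partial>cond_pmf S ?B) * emeasure S ?B"
  proof -
    have e0: "emeasure S ?B \<noteq> 0" using ne by (simp add: emeasure_measure_pmf_not_zero)
    have "(\<integral>\<^sup>+s. ?psi (?V s) \<partial>cond_pmf S ?B) * emeasure S ?B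
       = (\<integral>\<^sup>+s. ?psi (?V s) * indicator ?B s \<partial>S) / emeasure S ?B * emeasure S ?B"
      by (simp add: nn_integral_cond[OF ne])
    also have "\<dots> = (\<integral>\<^sup>+s. ?psi (?V s) * indicator ?B s \<partial>S)"
    proof -
      have "emeasure S ?B / emeasure S ?B = 1"
        by (intro ennreal_divide_self e0) (simp add: measure_pmf.emeasure_eq_measure)
      then show ?thesis by (simp add: ennreal_divide_times)
    qed
    finally show ?thesis ..
  qed
  also have "(\<integral>\<^sup>+s. ?psi (?V s) \<partial>cond_pmf S ?B) = (\<integral>\<^sup>+v. ?psi v \<partial>Phi0)"
    unfolding Phi[symmetric] by simp
  also have "\<dots> = emeasure (bind_pmf Phi0 (Psik \<nu> \<rho> i t a)) G"
    by simp
  finally show ?thesis by (simp add: mult_ac)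
qed

lemma D_cond_map:
  fixes i :: "'i::finite"
  assumes ne: "set_pmf S \<inter> {s. snd s i = h} \<noteq> {}"
    and Phi: "map_pmf (\<lambda>s. (fst s, Kr \<iota>1 \<iota> i (snd s))) (cond_pmf S {s. snd s i = h}) = Phi0"
    and pos: "measure_pmf.prob (step_of \<nu> (join_prof i gi (kprof \<iota>1 \<iota> \<rho>)) t S)
              {s. fst (snd s) i = h \<and> fst (snd (snd s)) i = a} > 0"
  shows "map_pmf (Yv \<iota>1 \<iota> i) (cond_pmf (step_of \<nu> (join_prof i gi (kprof \<iota>1 \<iota> \<rho>)) t S)
              {s. fst (snd s) i = h \<and> fst (snd (snd s)) i = a}) = bind_pmf Phi0 (Psik \<nu> \<rho> i t a)"
proof (rule pmf_eqI)
  fix y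
  let ?D = "step_of \<nu> (join_prof i gi (kprof \<iota>1 \<iota> \<rho>)) t S"
  let ?B = "{s. fst (snd s) i = h \<and> fst (snd (snd s)) i = a}"
  let ?c = "ennreal (pmf (gi t h) a) * emeasure S {s. snd s i = h}"
  let ?P = "bind_pmf Phi0 (Psik \<nu> \<rho> i t a)"
  have neD: "set_pmf ?D \<inter> ?B \<noteq> {}" using pos by (auto simp: measure_pmf_zero_iff[symmetric])
  have EB: "emeasure ?D ?B = ?c"
    using D_emeasure[OF ne Phi, where gi=gi and \<rho>=\<rho> and t=t and a=a and G=UNIV and \<nu>=\<nu>] by simp
  have Ey: "emeasure ?D (?B \<inter> Yv \<iota>1 \<iota> i -` {y}) = ?c * emeasure ?P {y}"
    using D_emeasure[OF ne Phi, where gi=gi and \<rho>=\<rho> and t=t and a=a and G="{y}" and \<nu>=\<nu>] by (simp add: Int_def vimage_def conj_ac)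
  have c0: "?c \<noteq> 0"
  proof -
    have "emeasure ?D ?B \<noteq> 0" using pos by (simp add: measure_pmf.emeasure_eq_measure)
    then show ?thesis using EB by simp
  qed
  have ct: "?c \<noteq> top"
  proof -
    have "emeasure ?D ?B \<noteq> top" by (rule emeasure_pmf_ne_top)
    then show ?thesis using EB by simp
  qed
  have "ennreal (pmf (map_pmf (Yv \<iota>1 \<iota> i) (cond_pmf ?D ?B)) y) = emeasure (cond_pmf ?D ?B) (Yv \<iota>1 \<iota> i -` {y})"
    by (simp add: emeasure_pmf_single[symmetric])
  also have "\<dots> = ?c * emeasure ?P {y} / ?c"
    by (simp add: emeasure_cond[OF neD] Ey EB)
  also have "\<dots> = emeasure ?P {y}"
    using c0 ct by (simp add: mult.commute[of ?c] mult_divide_eq_ennreal)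
  also have "\<dots> = ennreal (pmf ?P y)" by (simp add: emeasure_pmf_single)
  finally show "pmf (map_pmf (Yv \<iota>1 \<iota> i) (cond_pmf ?D ?B)) y = pmf ?P y"
    by simp
qed

lemma set_step_of:
  assumes "s \<in> set_pmf (step_of \<nu> g t S)"
  shows "(fst s, fst (snd s)) \<in> set_pmf S \<and> fst (snd (snd s)) \<in> set_pmf (act_prof g t (fst (snd s)))"
  using assms by (auto simp: step_of_def)

lemma set_act_prof:
  fixes H :: "'i::finite \<Rightarrow> _"
  assumes "u \<in> set_pmf (act_prof g t H)"
  shows "u j \<in> set_pmf (g t j (H j))"
proof -
  have "set_pmf (act_prof g t H) = PiE_dflt UNIV undefined (set_pmf \<circ> (\<lambda>j. g t j (H j)))"
    unfolding act_prof_def by (rule set_Pi_pmf) simp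
  with assms show ?thesis by (auto simp: PiE_dflt_def)
qed

lemma key_lemma:
  fixes i :: "'i::finite" and gi :: "nat \<Rightarrow> ('h,'z) hist \<Rightarrow> 'u pmf"
    and \<rho> :: "nat \<Rightarrow> 'i \<Rightarrow> 'k \<Rightarrow> 'u pmf"
    and \<mu> :: "('x \<times> ('i \<Rightarrow> 'h)) pmf" and \<nu> :: "nat \<Rightarrow> 'w pmf"
    and f :: "('x,'i,'u,'w,'z) dynamics"
  assumes kb: "kbased_others A T i \<rho>" and bs: "behav_strat A T i gi" and tT: "t \<in> {1..T}"
    and hP: "measure_pmf.prob (state_at \<mu> \<nu> f (join_prof i gi (kprof \<iota>1 \<iota> \<rho>)) t) {s. snd s i = h} > 0 \<Longrightarrow>
           (\<forall>x kk. measure_pmf.prob (cond_pmf (state_at \<mu> \<nu> f (join_prof i gi (kprof \<iota>1 \<iota> \<rho>)) t) {s. snd s i = h})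
                      {s. fst s = x \<and> restrict (\<lambda>j. compress \<iota>1 \<iota> j (snd s j)) (- {i}) = kk}
                    = pmf Phi0 (x, kk))"
    and pos0: "0 < measure_pmf.prob (step_at \<mu> \<nu> f (join_prof i gi (kprof \<iota>1 \<iota> \<rho>)) t)
                  {s. fst (snd s) i = h \<and> fst (snd (snd s)) i = a}"
  shows "map_pmf (Yv \<iota>1 \<iota> i) (cond_pmf (step_at \<mu> \<nu> f (join_prof i gi (kprof \<iota>1 \<iota> \<rho>)) t)
                  {s. fst (snd s) i = h \<and> fst (snd (snd s)) i = a}) = bind_pmf Phi0 (Psik \<nu> \<rho> i t a) \<and>
     (\<forall>s\<in>set_pmf (cond_pmf (step_at \<mu> \<nu> f (join_prof i gi (kprof \<iota>1 \<iota> \<rho>)) t)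
                  {s. fst (snd s) i = h \<and> fst (snd (snd s)) i = a}).
        (fst s, fst (snd s)) \<in> set_pmf (state_at \<mu> \<nu> f (join_prof i gi (kprof \<iota>1 \<iota> \<rho>)) t) \<and>
        fst (snd s) i = h \<and> fst (snd (snd s)) i = a \<and> (\<forall>j. fst (snd (snd s)) j \<in> A t j))"
proof -
  define g where "g = join_prof i gi (kprof \<iota>1 \<iota> \<rho>)"
  define S where "S = state_at \<mu> \<nu> f g t"
  define D where "D = step_at \<mu> \<nu> f g t"
  define B :: "('x \<times> ('i \<Rightarrow> ('h,'z) hist) \<times> ('i \<Rightarrow> 'u) \<times> 'w) set" where "B = {s. fst (snd s) i = h \<and> fst (snd (snd s)) i = a}"
  have Dd: "D = step_of \<nu> g t S" by (simp add: D_def S_def step_at_def)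
  have pos: "0 < measure_pmf.prob D B" using pos0 by (simp add: D_def g_def B_def)
  have neD: "set_pmf D \<inter> B \<noteq> {}" using pos by (simp add: measure_pmf_zero_iff[symmetric])
  have ne: "set_pmf S \<inter> {s. snd s i = h} \<noteq> {}"
  proof -
    from neD obtain s where s1: "s \<in> set_pmf D" and s2: "s \<in> B" by blast
    have "(fst s, fst (snd s)) \<in> set_pmf S" using set_step_of[of s \<nu> g t S] s1 unfolding Dd by blast
    moreover have "(fst s, fst (snd s)) \<in> {s. snd s i = h}" using s2 unfolding B_def by simp
    ultimately show ?thesis by blast
  qed
  have posS: "measure_pmf.prob S {s. snd s i = h} > 0"
  proof -
    from ne obtain s where "s \<in> set_pmf S" "s \<in> {s. snd s i = h}" by blast
    then show ?thesis by (rule measure_pmf_posI)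
  qed
  have Phi: "map_pmf (\<lambda>s. (fst s, Kr \<iota>1 \<iota> i (snd s))) (cond_pmf S {s. snd s i = h}) = Phi0"
  proof (rule pmf_eqI)
    fix y :: "'x \<times> ('i \<Rightarrow> 'k)"
    obtain x kk where y: "y = (x,kk)" by fastforce
    have V: "(\<lambda>s. (fst s, Kr \<iota>1 \<iota> i (snd s))) -` {y} =
         {s. fst s = x \<and> restrict (\<lambda>j. compress \<iota>1 \<iota> j (snd s j)) (- {i}) = kk}"
      by (auto simp: y Kr_def)
    have H: "measure_pmf.prob (cond_pmf S {s. snd s i = h})
                      {s. fst s = x \<and> restrict (\<lambda>j. compress \<iota>1 \<iota> j (snd s j)) (- {i}) = kk}
                    = pmf Phi0 (x, kk)"
      using hP posS unfolding S_def g_def by blast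
    show "pmf (map_pmf (\<lambda>s. (fst s, Kr \<iota>1 \<iota> i (snd s))) (cond_pmf S {s. snd s i = h})) y = pmf Phi0 y"
      unfolding pmf_map V H unfolding y ..
  qed
  have MAP: "map_pmf (Yv \<iota>1 \<iota> i) (cond_pmf D B) = bind_pmf Phi0 (Psik \<nu> \<rho> i t a)"
    unfolding Dd B_def g_def
    by (rule D_cond_map[OF ne Phi]) (use pos in \<open>simp only: Dd B_def g_def\<close>)
  have supp: "\<And>s. s \<in> set_pmf (cond_pmf D B) \<Longrightarrow>
        (fst s, fst (snd s)) \<in> set_pmf S \<and> fst (snd s) i = h \<and> fst (snd (snd s)) i = a \<and>
        (\<forall>j. fst (snd (snd s)) j \<in> A t j)"
  proof -
    fix s assume s: "s \<in> set_pmf (cond_pmf D B)"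
    then have sD: "s \<in> set_pmf D" and sB: "s \<in> B" using neD by auto
    from set_step_of[of s \<nu> g t S] sD have
      s1: "(fst s, fst (snd s)) \<in> set_pmf S" and
      s2: "fst (snd (snd s)) \<in> set_pmf (act_prof g t (fst (snd s)))" unfolding Dd by auto
    have "fst (snd (snd s)) j \<in> A t j" for j
    proof (cases "j = i")
      case True
      have "set_pmf (gi t (fst (snd s) i)) \<subseteq> A t i" using bs tT unfolding behav_strat_def by blast
      then show ?thesis using set_act_prof[OF s2, of j] True
        by (auto simp: g_def join_prof_def)
    next
      case False
      have "set_pmf (\<rho> t j (compress \<iota>1 \<iota> j (fst (snd s) j))) \<subseteq> A t j"
        using kb tT False unfolding kbased_others_def by blast
      then show ?thesis using set_act_prof[OF s2, of j] False
        by (auto simp: g_def join_prof_def kprof_def)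
    qed
    then show "?thesis s" using s1 sB by (auto simp: B_def)
  qed
  show ?thesis using MAP supp unfolding D_def B_def S_def g_def by blast
qed

lemma compress_next:
  assumes "length (snd (H i)) + 1 = t"
  shows "compress \<iota>1 \<iota> i (next_hist f t i (x,H,u,w)) = \<iota> (Suc t) i (compress \<iota>1 \<iota> i (H i)) (fst (snd (f t x u w)) i)"
  unfolding next_hist_def next_state_def compress_def using assms by (simp add: compr_aux_snoc split: prod.splits)

theorem lemma1:
  fixes \<mu> :: "('x::finite \<times> ('i::finite \<Rightarrow> 'h::finite)) pmf"
    and \<nu> :: "nat \<Rightarrow> 'w::finite pmf"
    and f :: "('x,'i,'u::finite,'w,'z::finite) dynamics"
    and A :: "nat \<Rightarrow> 'i \<Rightarrow> 'u set"
    and actof :: "nat \<Rightarrow> 'i \<Rightarrow> 'z \<Rightarrow> 'u"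
    and T :: nat
    and \<iota>1 :: "'i \<Rightarrow> 'h \<Rightarrow> 'k::finite"
    and \<iota> :: "nat \<Rightarrow> 'i \<Rightarrow> 'k \<Rightarrow> 'z \<Rightarrow> 'k"
  assumes wf: "game_wf f A actof T"
    and hyp: "\<forall>i \<rho>. kbased_others A T i \<rho> \<longrightarrow>
      (\<exists>\<Phi> :: nat \<Rightarrow> 'k \<Rightarrow> ('x \<times> ('i \<Rightarrow> 'k)) pmf.
         \<forall>gi. behav_strat A T i gi \<longrightarrow>
           (\<forall>t\<in>{1..T}. \<forall>h.
              let S = state_at \<mu> \<nu> f (join_prof i gi (kprof \<iota>1 \<iota> \<rho>)) t;
                  B = {s. snd s i = h}
              in measure_pmf.prob S B > 0 \<longrightarrow>
                 (\<forall>x kk. measure_pmf.prob (cond_pmf S B)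
                      {s. fst s = x \<and> restrict (\<lambda>j. compress \<iota>1 \<iota> j (snd s j)) (- {i}) = kk}
                    = pmf (\<Phi> t (compress \<iota>1 \<iota> i h)) (x, kk))))"
  shows "mutually_sufficient \<mu> \<nu> f A T \<iota>1 \<iota>"
  unfolding mutually_sufficient_def
proof (intro allI impI)
  fix i :: 'i and \<rho> :: "nat \<Rightarrow> 'i \<Rightarrow> 'k \<Rightarrow> 'u pmf"
  assume kb: "kbased_others A T i \<rho>"
  obtain \<Phi> :: "nat \<Rightarrow> 'k \<Rightarrow> ('x \<times> ('i \<Rightarrow> 'k)) pmf" where
    h\<Phi>: "\<forall>gi. behav_strat A T i gi \<longrightarrow>
           (\<forall>t\<in>{1..T}. \<forall>h.
              let S = state_at \<mu> \<nu> f (join_prof i gi (kprof \<iota>1 \<iota> \<rho>)) t;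
                  B = {s. snd s i = h}
              in measure_pmf.prob S B > 0 \<longrightarrow>
                 (\<forall>x kk. measure_pmf.prob (cond_pmf S B)
                      {s. fst s = x \<and> restrict (\<lambda>j. compress \<iota>1 \<iota> j (snd s j)) (- {i}) = kk}
                    = pmf (\<Phi> t (compress \<iota>1 \<iota> i h)) (x, kk)))"
    using hyp kb by blast
  have hP: "\<And>gi t h. behav_strat A T i gi \<Longrightarrow> t \<in> {1..T} \<Longrightarrow>
           measure_pmf.prob (state_at \<mu> \<nu> f (join_prof i gi (kprof \<iota>1 \<iota> \<rho>)) t) {s. snd s i = h} > 0 \<Longrightarrow>
           (\<forall>x kk. measure_pmf.prob (cond_pmf (state_at \<mu> \<nu> f (join_prof i gi (kprof \<iota>1 \<iota> \<rho>)) t) {s. snd s i = h})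
                      {s. fst s = x \<and> restrict (\<lambda>j. compress \<iota>1 \<iota> j (snd s j)) (- {i}) = kk}
                    = pmf (\<Phi> t (compress \<iota>1 \<iota> i h)) (x, kk))"
    using h\<Phi> unfolding Let_def by blast
  define \<Psi> where "\<Psi> t k a = bind_pmf (\<Phi> t k) (Psik \<nu> \<rho> i t a)" for t k a
  define N where "N t k y = \<iota> (Suc t) i k (fst (snd (f t (fst y) (fst (snd (snd y))) (snd (snd (snd y))))) i)"
    for t k and y :: "'x \<times> ('i \<Rightarrow> 'k) \<times> ('i \<Rightarrow> 'u) \<times> 'w"
  define R where "R t y = snd (snd (f t (fst y) (fst (snd (snd y))) (snd (snd (snd y))))) i"
    for t and y :: "'x \<times> ('i \<Rightarrow> 'k) \<times> ('i \<Rightarrow> 'u) \<times> 'w"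
  define P where "P t k a = map_pmf (N t k) (\<Psi> t k a)" for t k a
  define r where "r t k a = max (-1) (min 1 (measure_pmf.expectation (\<Psi> t k a) (R t)))" for t k a
  show "info_state \<mu> \<nu> f A T \<iota>1 \<iota> i (kprof \<iota>1 \<iota> \<rho>)"
    unfolding info_state_def Let_def
  proof (intro exI[of _ P] exI[of _ r] conjI allI impI ballI)
    show "r t k a \<in> {-1..1}" for t k a by (simp add: r_def)
  next
    fix gi :: "nat \<Rightarrow> ('h,'z) hist \<Rightarrow> 'u pmf" and t and h :: "('h,'z) hist" and a :: 'u and k'
    assume bs: "behav_strat A T i gi" and tT: "t \<in> {1..T}"
    assume pos0: "0 < measure_pmf.prob (step_at \<mu> \<nu> f (join_prof i gi (kprof \<iota>1 \<iota> \<rho>)) t)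
                  {s. fst (snd s) i = h \<and> fst (snd (snd s)) i = a}"
    let ?D = "step_at \<mu> \<nu> f (join_prof i gi (kprof \<iota>1 \<iota> \<rho>)) t"
    let ?B = "{s. fst (snd s) i = h \<and> fst (snd (snd s)) i = a}"
    let ?k = "compress \<iota>1 \<iota> i h"
    note K = key_lemma[OF kb bs tT hP[OF bs tT] pos0]
    have MAP: "map_pmf (Yv \<iota>1 \<iota> i) (cond_pmf ?D ?B) = \<Psi> t ?k a"
      using conjunct1[OF K] unfolding \<Psi>_def .
    have supp: "\<And>s. s \<in> set_pmf (cond_pmf ?D ?B) \<Longrightarrow>
        (fst s, fst (snd s)) \<in> set_pmf (state_at \<mu> \<nu> f (join_prof i gi (kprof \<iota>1 \<iota> \<rho>)) t) \<and> fst (snd s) i = h"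
      using conjunct2[OF K] by blast
    have "pmf (P t ?k a) k' = measure_pmf.prob (cond_pmf ?D ?B) (Yv \<iota>1 \<iota> i -` (N t ?k -` {k'}))"
      unfolding P_def pmf_map MAP[symmetric] measure_map_pmf ..
    also have "\<dots> = measure_pmf.prob (cond_pmf ?D ?B) {s. compress \<iota>1 \<iota> i (next_hist f t i s) = k'}"
    proof (rule measure_cong_set_pmf)
      fix s assume s: "s \<in> set_pmf (cond_pmf ?D ?B)"
      obtain x H u w where sx: "s = (x,H,u,w)" by (cases s) auto
      have xH: "(x, H) \<in> set_pmf (sd \<mu> \<nu> f (join_prof i gi (kprof \<iota>1 \<iota> \<rho>)) (t - 1))" and Hi: "H i = h"
        using supp[OF s] unfolding sx state_at_def by auto
      have "length (snd (H i)) = t - 1" by (rule sd_len[OF xH])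
      then have "length (snd (H i)) + 1 = t" using tT by simp
      from compress_next[where H=H and i=i and t=t, OF this, of \<iota>1 \<iota> f x u w]
      show "s \<in> Yv \<iota>1 \<iota> i -` (N t ?k -` {k'}) \<longleftrightarrow> s \<in> {s. compress \<iota>1 \<iota> i (next_hist f t i s) = k'}"
        unfolding sx by (simp add: Yv_def N_def Hi)
    qed
    finally show "measure_pmf.prob (cond_pmf ?D ?B) {s. compress \<iota>1 \<iota> i (next_hist f t i s) = k'} = pmf (P t ?k a) k'"
      ..
  next
    fix gi :: "nat \<Rightarrow> ('h,'z) hist \<Rightarrow> 'u pmf" and t and h :: "('h,'z) hist" and a :: 'u
    assume bs: "behav_strat A T i gi" and tT: "t \<in> {1..T}"
    assume pos0: "0 < measure_pmf.prob (step_at \<mu> \<nu> f (join_prof i gi (kprof \<iota>1 \<iota> \<rho>)) t)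
                  {s. fst (snd s) i = h \<and> fst (snd (snd s)) i = a}"
    let ?D = "step_at \<mu> \<nu> f (join_prof i gi (kprof \<iota>1 \<iota> \<rho>)) t"
    let ?B = "{s. fst (snd s) i = h \<and> fst (snd (snd s)) i = a}"
    let ?k = "compress \<iota>1 \<iota> i h"
    note K = key_lemma[OF kb bs tT hP[OF bs tT] pos0]
    have MAP: "map_pmf (Yv \<iota>1 \<iota> i) (cond_pmf ?D ?B) = \<Psi> t ?k a"
      using conjunct1[OF K] unfolding \<Psi>_def .
    have supp: "\<And>s. s \<in> set_pmf (cond_pmf ?D ?B) \<Longrightarrow> (\<forall>j. fst (snd (snd s)) j \<in> A t j)"
      using conjunct2[OF K] by blast
    have "measure_pmf.expectation (cond_pmf ?D ?B) (reward f t i)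
        = measure_pmf.expectation (cond_pmf ?D ?B) (\<lambda>s. R t (Yv \<iota>1 \<iota> i s))"
      by (rule Bochner_Integration.integral_cong) (auto simp: reward_def R_def Yv_def split: prod.splits)
    also have "\<dots> = measure_pmf.expectation (\<Psi> t ?k a) (R t)"
      by (simp flip: MAP)
    finally have E: "measure_pmf.expectation (cond_pmf ?D ?B) (reward f t i) = measure_pmf.expectation (\<Psi> t ?k a) (R t)" .
    have bnd: "\<And>y. y \<in> set_pmf (\<Psi> t ?k a) \<Longrightarrow> R t y \<in> {-1..1}"
    proof -
      fix y assume "y \<in> set_pmf (\<Psi> t ?k a)"
      then obtain s where s: "s \<in> set_pmf (cond_pmf ?D ?B)" and y: "y = Yv \<iota>1 \<iota> i s"
        unfolding MAP[symmetric] by auto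
      have uA: "\<forall>j. fst (snd (snd s)) j \<in> A t j" using supp[OF s] .
      have "case f t (fst s) (fst (snd (snd s))) (snd (snd (snd s))) of (x',z,r) \<Rightarrow>
              (\<forall>j. actof t j (z j) = fst (snd (snd s)) j) \<and> (\<forall>j. r j \<in> {-1..1})"
        by (rule mp[OF spec[OF spec[OF spec[OF bspec[OF wf[unfolded game_wf_def] tT], of "fst s"], of "fst (snd (snd s))"], of "snd (snd (snd s))"] uA])
      then show "R t y \<in> {-1..1}"
        unfolding R_def y Yv_def by (simp split: prod.splits)
    qed
    have int: "integrable (measure_pmf (\<Psi> t ?k a)) (R t)"
      by (rule integrable_measure_pmf_finite) (rule finite_subset[OF subset_UNIV finite])
    have "measure_pmf.expectation (\<Psi> t ?k a) (R t) \<le> measure_pmf.expectation (\<Psi> t ?k a) (\<lambda>_. 1)"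
      using bnd by (intro integral_mono_AE int) (auto simp: AE_measure_pmf_iff)
    moreover have "measure_pmf.expectation (\<Psi> t ?k a) (\<lambda>_. -1) \<le> measure_pmf.expectation (\<Psi> t ?k a) (R t)"
      using bnd by (intro integral_mono_AE int) (auto simp: AE_measure_pmf_iff)
    ultimately have "measure_pmf.expectation (\<Psi> t ?k a) (R t) \<in> {-1..1}" by simp
    then show "measure_pmf.expectation (cond_pmf ?D ?B) (reward f t i) = r t ?k a"
      using E by (simp add: r_def)
  qed
qed

end
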